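(* Under the Standing Assumptions, let $g:X\to X$ be a homeomorphism commuting with $f$ and let $\Gamma:\mathcal E\to\mathcal E$ be a continuous linear extension of $g$ (fiber isomorphisms $\Gamma_x:\mathcal E_x\to\mathcal E_{gx}$ depending continuously on $x$) commuting with $F$, i.e. $\Gamma_{fx}\circ F_x=F_{gx}\circ\Gamma_x$ for all $x$. Then $\Gamma_x(\mathcal E^i_x)=\mathcal E^i_{gx}$ for all $x\in X$ and $i=1,\dots,\ell$; in particular $\Gamma_x\in\mathcal R_{x,gx}$. (This applies to $\Gamma_x=D_0\mathcal G_x$ for a $C^1$ extension $\mathcal G$ of $g$ preserving the zero section and commuting with $\mathcal F$.)
   Context: Standing Assumptions: $X$ is a compact metric space, $f:X\to X$ a homeomorphism, $\mathcal E$ a continuous finite-dimensional real vector bundle over $X$ with a continuous family of inner-product norms. $F:\mathcal E\to\mathcal E$ is a continuous linear extension of $f$ with fiber isomorphisms $F_x:\mathcal E_x\to\mathcal E_{fx}$; $\chi=(\chi_1,\dots,\chi_\ell)$ with $\chi_1<\dots<\chi_\ell<0$ and $0<\varepsilon<\varepsilon_0(\chi)$; there is a continuous $F$-invariant splitting $\mathcal E=\mathcal E^1\oplus\dots\oplus\mathcal E^\ell$ with $e^{\chi_i-\varepsilon}\|t\|\le\|F_xt\|\le e^{\chi_i+\varepsilon}\|t\|$ for $t\in\mathcal E^i_x$ (after choosing a suitable continuous metric; this holds whenever $F$ has $(\chi,\varepsilon)$-spectrum, i.e. $\{\lambda: e^\lambda\in\mathrm{Sp}(F^*_{\mathbb C})\}\subset\bigcup_i(\chi_i-\varepsilon,\chi_i+\varepsilon)$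 where $F^*v(x)=F(v(f^{-1}x))$ on continuous sections). $\mathcal R_{x,y}$ denotes resonance polynomial maps $\mathcal E_x\to\mathcal E_y$ fixing $0$ with invertible derivative; a linear map is in $\mathcal R_{x,y}$ iff it maps $\mathcal E^i_x$ into $\mathcal E^i_y$ for all $i$. Constants: $d=\lfloor\chi_1/\chi_\ell\rfloor$; $\tilde\lambda=\max\{-\chi_i+\sum_js_j\chi_j<0\}$, $\mu=\max\{\chi_i-\sum_js_j\chi_j<0\}$ (over $i$ and non-negative integers $s_j$ making the expression negative); $\lambda=\max\{\tilde\lambda,-\chi_1+(d+1)\chi_\ell\}$; $\varepsilon_0(\chi)=\min\{-\chi_\ell,-\lambda/(d+2),-\mu/(d+1)\}$. *)

theory Defs
  imports "HOL-Analysis.Analysis"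
begin

text \<open>A continuous vector bundle over X is modelled as a continuous subbundle of the
  trivial bundle X \<times> 'v ('v a Euclidean space): a family of linear subspaces E x
  admitting a continuous family of (linear) projections onto them.\<close>

definition cont_subbundle :: "'x::metric_space set \<Rightarrow> ('x \<Rightarrow> 'v::euclidean_space set) \<Rightarrow> bool" where
  "cont_subbundle X E \<longleftrightarrow> (\<forall>x\<in>X. subspace (E x)) \<and>
     (\<exists>P :: 'x \<Rightarrow> 'v \<Rightarrow>\<^sub>L 'v. continuous_on X P \<and>
        (\<forall>x\<in>X. range (blinfun_apply (P x)) = E x \<and> (\<forall>v. P x (P x v) = P x v)))"

definition total_space :: "'x set \<Rightarrow> ('x \<Rightarrow> 'v set) \<Rightarrow> ('x \<times> 'v) set" where
  "total_space X E = {(x, v). x \<in> X \<and> v \<in> E x}"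

definition fiber_linear :: "'v::real_vector set \<Rightarrow> ('v \<Rightarrow> 'w::real_vector) \<Rightarrow> bool" where
  "fiber_linear V L \<longleftrightarrow> (\<forall>u\<in>V. \<forall>w\<in>V. L (u + w) = L u + L w) \<and> (\<forall>u\<in>V. \<forall>a. L (a *\<^sub>R u) = a *\<^sub>R L u)"

definition lin_ext :: "'x::metric_space set \<Rightarrow> ('x \<Rightarrow> 'v::euclidean_space set) \<Rightarrow> ('x \<Rightarrow> 'x)
     \<Rightarrow> ('x \<Rightarrow> 'v \<Rightarrow> 'v) \<Rightarrow> bool" where
  "lin_ext X E h H \<longleftrightarrow> (\<forall>x\<in>X. fiber_linear (E x) (H x) \<and> bij_betw (H x) (E x) (E (h x))) \<and>
     continuous_on (total_space X E) (\<lambda>(x, v). H x v)"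

definition cont_inner_family :: "'x::metric_space set \<Rightarrow> ('x \<Rightarrow> 'v::euclidean_space set)
     \<Rightarrow> ('x \<Rightarrow> 'v \<Rightarrow> 'v \<Rightarrow> real) \<Rightarrow> bool" where
  "cont_inner_family X E ip \<longleftrightarrow>
     (\<forall>x\<in>X. (\<forall>u\<in>E x. \<forall>w\<in>E x. ip x u w = ip x w u) \<and>
             (\<forall>w\<in>E x. fiber_linear (E x) (\<lambda>u. ip x u w)) \<and>
             (\<forall>u\<in>E x. u \<noteq> 0 \<longrightarrow> ip x u u > 0)) \<and>
     continuous_on {(x, u, w). x \<in> X \<and> u \<in> E x \<and> w \<in> E x} (\<lambda>(x, u, w). ip x u w)"

definition invariant_splitting :: "'x::metric_space set \<Rightarrow> ('x \<Rightarrow> 'v::euclidean_space set) \<Rightarrow> ('x \<Rightarrow> 'x)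
     \<Rightarrow> ('x \<Rightarrow> 'v \<Rightarrow> 'v) \<Rightarrow> nat \<Rightarrow> (nat \<Rightarrow> 'x \<Rightarrow> 'v set) \<Rightarrow> bool" where
  "invariant_splitting X E f F l Es \<longleftrightarrow>
     (\<forall>i\<in>{1..l}. cont_subbundle X (Es i) \<and>
        (\<forall>x\<in>X. Es i x \<subseteq> E x \<and> F x ` Es i x = Es i (f x))) \<and>
     (\<forall>x\<in>X. \<forall>v\<in>E x. \<exists>!u :: nat \<Rightarrow> 'v. (\<forall>i\<in>{1..l}. u i \<in> Es i x) \<and>
         (\<forall>i. i \<notin> {1..l} \<longrightarrow> u i = 0) \<and> v = (\<Sum>i=1..l. u i))"

definition d_const :: "nat \<Rightarrow> (nat \<Rightarrow> real) \<Rightarrow> int" where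
  "d_const l chi = \<lfloor>chi 1 / chi l\<rfloor>"

definition lambda_tilde :: "nat \<Rightarrow> (nat \<Rightarrow> real) \<Rightarrow> real" where
  "lambda_tilde l chi = Sup {t. \<exists>i\<in>{1..l}. \<exists>s :: nat \<Rightarrow> nat.
       t = - chi i + (\<Sum>j=1..l. real (s j) * chi j) \<and> t < 0}"

definition mu_const :: "nat \<Rightarrow> (nat \<Rightarrow> real) \<Rightarrow> real" where
  "mu_const l chi = Sup {t. \<exists>i\<in>{1..l}. \<exists>s :: nat \<Rightarrow> nat.
       t = chi i - (\<Sum>j=1..l. real (s j) * chi j) \<and> t < 0}"

definition lambda_const :: "nat \<Rightarrow> (nat \<Rightarrow> real) \<Rightarrow> real" where
  "lambda_const l chi = max (lambda_tilde l chi) (- chi 1 + (real_of_int (d_const l chi) + 1) * chi l)"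

definition eps0 :: "nat \<Rightarrow> (nat \<Rightarrow> real) \<Rightarrow> real" where
  "eps0 l chi = Min {- chi l, - lambda_const l chi / (real_of_int (d_const l chi) + 2),
                   - mu_const l chi / (real_of_int (d_const l chi) + 1)}"

end

theory Submission
  imports Defs
begin


lemma subbundle_mem:
  fixes X :: "'x::metric_space set" and E :: "'x \<Rightarrow> 'v::euclidean_space set"
  assumes "cont_subbundle X E"
  obtains P :: "'x \<Rightarrow> 'v \<Rightarrow>\<^sub>L 'v" where "continuous_on X P"
    "\<And>x v. x \<in> X \<Longrightarrow> v \<in> E x \<longleftrightarrow> P x v = v"
proof -
  obtain P :: "'x \<Rightarrow> 'v \<Rightarrow>\<^sub>L 'v" where P: "continuous_on X P"
     "\<forall>x\<in>X. range (blinfun_apply (P x)) = E x \<and> (\<forall>v. P x (P x v) = P x v)"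
    using assms unfolding cont_subbundle_def by blast
  show ?thesis
  proof (rule that[OF P(1)])
    fix x v assume x: "x \<in> X"
    show "v \<in> E x \<longleftrightarrow> P x v = v"
    proof
      assume "v \<in> E x"
      then obtain w where "v = P x w" using P(2) x by blast
      then show "P x v = v" using P(2) x by simp
    next
      assume "P x v = v" then show "v \<in> E x" using P(2) x
        by (metis rangeI)
    qed
  qed
qed

lemma compact_unit:
  fixes X :: "'x::metric_space set" and E :: "'x \<Rightarrow> 'v::euclidean_space set"
  assumes "compact X" "cont_subbundle X E"
  shows "compact {(x, v). x \<in> X \<and> v \<in> E x \<and> norm v = 1}"
proof -
  obtain P :: "'x \<Rightarrow> 'v \<Rightarrow>\<^sub>L 'v" where P: "continuous_on X P"
    "\<And>x v. x \<in> X \<Longrightarrow> v \<in> E x \<longleftrightarrow> P x v = v"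
    using subbundle_mem[OF assms(2)] by blast
  let ?S = "X \<times> sphere (0::'v) 1"
  have cS: "compact ?S" using assms(1) by (simp add: compact_Times)
  have cont: "continuous_on ?S (\<lambda>p. P (fst p) (snd p) - snd p)"
    by (intro continuous_intros continuous_on_compose2[OF P(1)]) auto
  have cl: "closed {p \<in> ?S. P (fst p) (snd p) - snd p = 0}"
    by (rule continuous_closed_preimage_constant[OF cont compact_imp_closed[OF cS]])
  have eq: "{(x, v). x \<in> X \<and> v \<in> E x \<and> norm v = 1} = ?S \<inter> {p \<in> ?S. P (fst p) (snd p) - snd p = 0}"
    using P(2) by auto
  show ?thesis unfolding eq by (rule compact_Int_closed[OF cS cl])
qed


lemma ip_scale:
  assumes ip: "cont_inner_family X E ip" and x: "x \<in> X" and sub: "subspace (E x)"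
    and e: "e \<in> E x"
  shows "ip x (r *\<^sub>R e) (r *\<^sub>R e) = r * r * ip x e e"
proof -
  have re: "r *\<^sub>R e \<in> E x" using sub e by (simp add: subspace_scale)
  have lin: "\<And>w. w \<in> E x \<Longrightarrow> fiber_linear (E x) (\<lambda>u. ip x u w)"
    and sym: "\<And>u w. u \<in> E x \<Longrightarrow> w \<in> E x \<Longrightarrow> ip x u w = ip x w u"
    using ip x unfolding cont_inner_family_def by auto
  have "ip x (r *\<^sub>R e) (r *\<^sub>R e) = r * ip x e (r *\<^sub>R e)"
    using lin[OF re] e unfolding fiber_linear_def by auto
  also have "ip x e (r *\<^sub>R e) = ip x (r *\<^sub>R e) e" using sym re e by auto
  also have "\<dots> = r * ip x e e" using lin[OF e] e unfolding fiber_linear_def by auto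
  finally show ?thesis by simp
qed

lemma ip_nonneg:
  assumes ip: "cont_inner_family X E ip" and x: "x \<in> X" and sub: "subspace (E x)"
    and e: "e \<in> E x"
  shows "ip x e e \<ge> 0"
proof (cases "e = 0")
  case True
  have "ip x ((0::real) *\<^sub>R e) ((0::real) *\<^sub>R e) = 0"
    using ip_scale[OF ip x sub e, of 0] by simp
  then show ?thesis using True by simp
next
  case False then show ?thesis using ip x e unfolding cont_inner_family_def
    by (simp add: order_less_imp_le)
qed

lemma norm_equiv:
  fixes X :: "'x::metric_space set" and E :: "'x \<Rightarrow> 'v::euclidean_space set"
  assumes cX: "compact X" and sb: "cont_subbundle X E" and ip: "cont_inner_family X E ip"
  shows "\<exists>C1>0. \<exists>C2>0. \<forall>x\<in>X. \<forall>v\<in>E x. norm v \<le> C1 * sqrt (ip x v v) \<and> sqrt (ip x v v) \<le> C2 * norm v"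
proof -
  let ?S = "{(x, v). x \<in> X \<and> v \<in> E x \<and> norm v = 1}"
  let ?phi = "\<lambda>p. ip (fst p) (snd p) (snd p)"
  have cS: "compact ?S" by (rule compact_unit[OF cX sb])
  have sub: "\<And>x. x \<in> X \<Longrightarrow> subspace (E x)" using sb unfolding cont_subbundle_def by auto
  have cont: "continuous_on ?S ?phi"
  proof -
    have c1: "continuous_on {(x, u, w). x \<in> X \<and> u \<in> E x \<and> w \<in> E x} (\<lambda>(x, u, w). ip x u w)"
      using ip unfolding cont_inner_family_def by auto
    have c2: "continuous_on ?S (\<lambda>p. (fst p, snd p, snd p))"
      by (intro continuous_intros)
    have "continuous_on ?S (\<lambda>p. (\<lambda>(x, u, w). ip x u w) (fst p, snd p, snd p))"
      by (rule continuous_on_compose2[OF c1 c2]) auto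
    then show ?thesis by simp
  qed
  have pos: "\<And>p. p \<in> ?S \<Longrightarrow> ?phi p > 0"
  proof -
    fix p assume "p \<in> ?S"
    then obtain x v where p: "p = (x, v)" "x \<in> X" "v \<in> E x" "norm v = 1" by auto
    then have "v \<noteq> 0" by auto
    then show "?phi p > 0" using ip p unfolding cont_inner_family_def by auto
  qed
  obtain m where m: "m > 0" "\<And>p. p \<in> ?S \<Longrightarrow> m \<le> ?phi p"
  proof (cases "?S = {}")
    case True then show ?thesis using that[of 1] by auto
  next
    case False
    have "compact (?phi ` ?S)" by (rule compact_continuous_image[OF cont cS])
    then obtain s where "s \<in> ?phi ` ?S" "\<forall>t\<in>?phi ` ?S. s \<le> t"
      using compact_attains_inf[of "?phi ` ?S"] False by blast
    then show ?thesis using that[of s] pos by blast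
  qed
  obtain M where M: "M > 0" "\<And>p. p \<in> ?S \<Longrightarrow> ?phi p \<le> M"
  proof -
    have "bounded (?phi ` ?S)" by (rule compact_imp_bounded[OF compact_continuous_image[OF cont cS]])
    then obtain B where B: "\<And>y. y \<in> ?phi ` ?S \<Longrightarrow> norm y \<le> B" unfolding bounded_iff by blast
    show ?thesis
    proof (rule that[of "max B 1"])
      fix p assume "p \<in> ?S"
      then have "norm (?phi p) \<le> B" using B by blast
      then show "?phi p \<le> max B 1" by auto
    qed auto
  qed
  have main: "\<forall>x\<in>X. \<forall>v\<in>E x. norm v \<le> 1 / sqrt m * sqrt (ip x v v) \<and> sqrt (ip x v v) \<le> sqrt M * norm v"
  proof (intro ballI)
    fix x v assume x: "x \<in> X" and v: "v \<in> E x"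
    show "norm v \<le> 1 / sqrt m * sqrt (ip x v v) \<and> sqrt (ip x v v) \<le> sqrt M * norm v"
    proof (cases "v = 0")
      case True
      have "ip x ((0::real) *\<^sub>R v) ((0::real) *\<^sub>R v) = 0"
        using ip_scale[OF ip x sub[OF x] v, of 0] by simp
      then show ?thesis using True by simp
    next
      case False
      define r where "r = norm v"
      define e where "e = (1 / r) *\<^sub>R v"
      have r: "r > 0" using False r_def by auto
      have e: "e \<in> E x" using sub[OF x] v e_def by (simp add: subspace_scale)
      have ve: "v = r *\<^sub>R e" using r e_def by auto
      have ne: "norm e = 1" using r e_def r_def by auto
      have inS: "(x, e) \<in> ?S" using x e ne by auto
      have eq: "ip x v v = r * r * ip x e e" using ve ip_scale[OF ip x sub[OF x] e] by simp
      have sq: "sqrt (ip x v v) = r * sqrt (ip x e e)"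
        using eq r by (simp add: real_sqrt_mult)
      have lo: "sqrt m \<le> sqrt (ip x e e)" using m(2)[OF inS] by simp
      have hi: "sqrt (ip x e e) \<le> sqrt M" using M(2)[OF inS] by simp
      have "r * sqrt m \<le> r * sqrt (ip x e e)" using lo r by simp
      then have "norm v \<le> 1 / sqrt m * sqrt (ip x v v)"
        using m(1) sq r_def by (simp add: field_simps)
      moreover have "sqrt (ip x v v) \<le> sqrt M * norm v"
        using sq hi r r_def by (simp add: mult.commute mult_left_mono)
      ultimately show ?thesis by blast
    qed
  qed
  have "1 / sqrt m > 0" "sqrt M > 0" using m M by auto
  then show ?thesis using main by blast
qed

lemma lin_bound:
  fixes X :: "'x::metric_space set" and E :: "'x \<Rightarrow> 'v::euclidean_space set"
  assumes cX: "compact X" and sb: "cont_subbundle X E" and G: "lin_ext X E g \<Gamma>"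
  shows "\<exists>K>0. \<forall>x\<in>X. \<forall>v\<in>E x. norm (\<Gamma> x v) \<le> K * norm v"
proof -
  let ?S = "{(x, v). x \<in> X \<and> v \<in> E x \<and> norm v = 1}"
  let ?psi = "\<lambda>p. norm (\<Gamma> (fst p) (snd p))"
  have cS: "compact ?S" by (rule compact_unit[OF cX sb])
  have sub: "\<And>x. x \<in> X \<Longrightarrow> subspace (E x)" using sb unfolding cont_subbundle_def by auto
  have c1: "continuous_on (total_space X E) (\<lambda>(x, v). \<Gamma> x v)" using G unfolding lin_ext_def by auto
  have "continuous_on ?S (\<lambda>(x, v). \<Gamma> x v)"
    by (rule continuous_on_subset[OF c1]) (auto simp: total_space_def)
  then have "continuous_on ?S (\<lambda>p. \<Gamma> (fst p) (snd p))"
    by (simp add: case_prod_beta')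
  then have cont: "continuous_on ?S ?psi" by (intro continuous_intros)
  have "bounded (?psi ` ?S)" by (rule compact_imp_bounded[OF compact_continuous_image[OF cont cS]])
  then obtain B where B: "\<And>y. y \<in> ?psi ` ?S \<Longrightarrow> norm y \<le> B" unfolding bounded_iff by blast
  show ?thesis
  proof (intro exI[of _ "max B 1"] conjI ballI)
    show "max B 1 > 0" by simp
    fix x v assume x: "x \<in> X" and v: "v \<in> E x"
    have fl: "fiber_linear (E x) (\<Gamma> x)" using G x unfolding lin_ext_def by auto
    show "norm (\<Gamma> x v) \<le> max B 1 * norm v"
    proof (cases "v = 0")
      case True
      have "\<Gamma> x ((0::real) *\<^sub>R v) = 0 *\<^sub>R \<Gamma> x v" using fl v unfolding fiber_linear_def by blast
      then show ?thesis using True by simp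
    next
      case False
      define r where "r = norm v"
      define e where "e = (1 / r) *\<^sub>R v"
      have r: "r > 0" using False r_def by auto
      have e: "e \<in> E x" using sub[OF x] v e_def by (simp add: subspace_scale)
      have ve: "v = r *\<^sub>R e" using r e_def by auto
      have ne: "norm e = 1" using r e_def r_def by auto
      have inS: "(x, e) \<in> ?S" using x e ne by auto
      have "norm (\<Gamma> x e) \<le> B" using B inS by force
      then have le: "norm (\<Gamma> x e) \<le> max B 1" by simp
      have "\<Gamma> x v = r *\<^sub>R \<Gamma> x e" using fl e ve unfolding fiber_linear_def by blast
      then have "norm (\<Gamma> x v) = r * norm (\<Gamma> x e)" using r by simp
      also have "\<dots> \<le> r * max B 1" using le r by (simp add: mult_left_mono)
      finally show ?thesis using r_def by (simp add: mult.commute)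
    qed
  qed
qed



primrec iter :: "('x \<Rightarrow> 'x) \<Rightarrow> ('x \<Rightarrow> 'v \<Rightarrow> 'v) \<Rightarrow> nat \<Rightarrow> 'x \<Rightarrow> 'v \<Rightarrow> 'v" where
  "iter f F 0 x v = v"
| "iter f F (Suc n) x v = F ((f ^^ n) x) (iter f F n x v)"

lemma iter_Suc': "iter f F (Suc n) x v = iter f F n (f x) (F x v)"
proof (induction n arbitrary: x v)
  case 0 then show ?case by simp
next
  case (Suc n)
  have "iter f F (Suc (Suc n)) x v = F ((f ^^ Suc n) x) (iter f F (Suc n) x v)" by simp
  also have "\<dots> = F ((f ^^ n) (f x)) (iter f F n (f x) (F x v))"
    using Suc by (simp add: funpow_swap1)
  finally show ?case by simp
qed

lemma add_sum:
  fixes L :: "'v::real_vector \<Rightarrow> 'w::real_vector"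
  assumes V: "subspace V" and add: "\<And>u v. u \<in> V \<Longrightarrow> v \<in> V \<Longrightarrow> L (u + v) = L u + L v"
    and A: "finite A" and vs: "\<And>j. j \<in> A \<Longrightarrow> v j \<in> V"
  shows "L (\<Sum>j\<in>A. v j) = (\<Sum>j\<in>A. L (v j))"
  using A vs
proof (induction A rule: finite_induct)
  case empty
  have "L (0 + 0) = L 0 + L 0" using add V subspace_0 by blast
  then show ?case by simp
next
  case (insert a A)
  have s: "(\<Sum>j\<in>A. v j) \<in> V" using insert V by (simp add: subspace_sum)
  have "L (\<Sum>j\<in>insert a A. v j) = L (v a + (\<Sum>j\<in>A. v j))" using insert by simp
  also have "\<dots> = L (v a) + L (\<Sum>j\<in>A. v j)" using add s insert by simp
  finally show ?case using insert by simp
qed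

lemma exp_contra:
  fixes A B alpha beta :: real
  assumes A: "A > 0" and ab: "alpha > beta"
    and h: "\<And>n::nat. A * exp (real n * alpha) \<le> B * exp (real n * beta)"
  shows False
proof -
  define d where "d = alpha - beta"
  have d: "d > 0" using ab d_def by simp
  obtain n :: nat where n: "B / (A * d) < real n" using reals_Archimedean2 by blast
  have "A * exp (real n * d) * exp (real n * beta) = A * exp (real n * alpha)"
    by (simp add: d_def mult.assoc exp_add[symmetric] algebra_simps)
  also have "\<dots> \<le> B * exp (real n * beta)" by (rule h)
  finally have "A * exp (real n * d) \<le> B" by simp
  moreover have "1 + real n * d \<le> exp (real n * d)" by (rule exp_ge_add_one_self)
  moreover have "B < A * (real n * d)" using n A d by (simp add: field_simps)
  ultimately have "A * (1 + real n * d) \<le> B" "B < A * (real n * d)"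
    using A by (meson order_trans mult_left_mono less_imp_le) +
  then show False using A by (simp add: algebra_simps)
qed

lemma exp_mono_n: "c \<le> d \<Longrightarrow> exp (real n * c) \<le> exp (real n * d)"
  by (simp add: mult_left_mono)

lemma exp_inv1: "exp (real n * c) * a \<le> b \<Longrightarrow> a \<le> exp (real n * (- c)) * b"
proof -
  assume h: "exp (real n * c) * a \<le> b"
  have "exp (real n * (- c)) * (exp (real n * c) * a) \<le> exp (real n * (- c)) * b"
    by (rule mult_left_mono[OF h]) simp
  then show ?thesis by (simp add: mult.assoc[symmetric] exp_add[symmetric])
qed

lemma exp_inv2: "a \<le> exp (real n * c) * b \<Longrightarrow> exp (real n * (- c)) * a \<le> b"
proof -
  assume h: "a \<le> exp (real n * c) * b"
  have "exp (real n * (- c)) * a \<le> exp (real n * (- c)) * (exp (real n * c) * b)"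
    by (rule mult_left_mono[OF h]) simp
  then show ?thesis by (simp add: mult.assoc[symmetric] exp_add[symmetric])
qed


locale dyn =
  fixes X :: "'x set" and E :: "'x \<Rightarrow> 'v::euclidean_space set" and f f' g :: "'x \<Rightarrow> 'x"
    and F G :: "'x \<Rightarrow> 'v \<Rightarrow> 'v" and l :: nat and chi :: "nat \<Rightarrow> real" and eps :: real
    and Es :: "nat \<Rightarrow> 'x \<Rightarrow> 'v set" and N :: "'x \<Rightarrow> 'v \<Rightarrow> real" and C1 C2 K :: real
  assumes fX: "\<And>x. x \<in> X \<Longrightarrow> f x \<in> X" and f'X: "\<And>x. x \<in> X \<Longrightarrow> f' x \<in> X"
    and ff': "\<And>x. x \<in> X \<Longrightarrow> f (f' x) = x"
    and gX: "\<And>x. x \<in> X \<Longrightarrow> g x \<in> X" and fg: "\<And>x. x \<in> X \<Longrightarrow> f (g x) = g (f x)"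
    and Esub: "\<And>x. x \<in> X \<Longrightarrow> subspace (E x)"
    and F_E: "\<And>x v. x \<in> X \<Longrightarrow> v \<in> E x \<Longrightarrow> F x v \<in> E (f x)"
    and F_add: "\<And>x u v. x \<in> X \<Longrightarrow> u \<in> E x \<Longrightarrow> v \<in> E x \<Longrightarrow> F x (u + v) = F x u + F x v"
    and G_E: "\<And>x v. x \<in> X \<Longrightarrow> v \<in> E x \<Longrightarrow> G x v \<in> E (g x)"
    and G_add: "\<And>x u v. x \<in> X \<Longrightarrow> u \<in> E x \<Longrightarrow> v \<in> E x \<Longrightarrow> G x (u + v) = G x u + G x v"
    and G_surj: "\<And>x w. x \<in> X \<Longrightarrow> w \<in> E (g x) \<Longrightarrow> \<exists>v\<in>E x. G x v = w"
    and comm: "\<And>x v. x \<in> X \<Longrightarrow> v \<in> E x \<Longrightarrow> G (f x) (F x v) = F (g x) (G x v)"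
    and Es_sub: "\<And>i x. i \<in> {1..l} \<Longrightarrow> x \<in> X \<Longrightarrow> Es i x \<subseteq> E x"
    and Es_subsp: "\<And>i x. i \<in> {1..l} \<Longrightarrow> x \<in> X \<Longrightarrow> subspace (Es i x)"
    and Es_img: "\<And>i x. i \<in> {1..l} \<Longrightarrow> x \<in> X \<Longrightarrow> F x ` Es i x = Es i (f x)"
    and split: "\<And>x v. x \<in> X \<Longrightarrow> v \<in> E x \<Longrightarrow> \<exists>!u :: nat \<Rightarrow> 'v. (\<forall>i\<in>{1..l}. u i \<in> Es i x) \<and>
         (\<forall>i. i \<notin> {1..l} \<longrightarrow> u i = 0) \<and> v = (\<Sum>i=1..l. u i)"
    and C1: "C1 > 0" and C2: "C2 > 0" and Kpos: "K > 0"
    and N_lo: "\<And>x v. x \<in> X \<Longrightarrow> v \<in> E x \<Longrightarrow> norm v \<le> C1 * N x v"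
    and N_hi: "\<And>x v. x \<in> X \<Longrightarrow> v \<in> E x \<Longrightarrow> N x v \<le> C2 * norm v"
    and G_N: "\<And>x v. x \<in> X \<Longrightarrow> v \<in> E x \<Longrightarrow> N (g x) (G x v) \<le> K * N x v"
    and gr_lo: "\<And>i x t. i \<in> {1..l} \<Longrightarrow> x \<in> X \<Longrightarrow> t \<in> Es i x \<Longrightarrow> exp (chi i - eps) * N x t \<le> N (f x) (F x t)"
    and gr_hi: "\<And>i x t. i \<in> {1..l} \<Longrightarrow> x \<in> X \<Longrightarrow> t \<in> Es i x \<Longrightarrow> N (f x) (F x t) \<le> exp (chi i + eps) * N x t"
    and gap: "\<And>j k. 1 \<le> j \<Longrightarrow> j < k \<Longrightarrow> k \<le> l \<Longrightarrow> chi j + eps < chi k - eps"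
    and cmono: "\<And>j k. 1 \<le> j \<Longrightarrow> j \<le> k \<Longrightarrow> k \<le> l \<Longrightarrow> chi j \<le> chi k"
begin

abbreviation It where "It \<equiv> iter f F"

lemma N_nonneg: "x \<in> X \<Longrightarrow> v \<in> E x \<Longrightarrow> 0 \<le> N x v"
  using N_lo[of x v] C1 by (metis norm_ge_zero order_trans zero_le_mult_iff not_le less_imp_le)

lemma N_zero: "x \<in> X \<Longrightarrow> v \<in> E x \<Longrightarrow> N x v \<le> 0 \<Longrightarrow> v = 0"
  using N_lo[of x v] C1 by (metis mult_nonneg_nonpos less_imp_le norm_le_zero_iff order_trans)

lemma N_pos: "x \<in> X \<Longrightarrow> v \<in> E x \<Longrightarrow> v \<noteq> 0 \<Longrightarrow> 0 < N x v"
  using N_zero by force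

lemma fn_X: "x \<in> X \<Longrightarrow> (f ^^ n) x \<in> X"
  by (induction n) (auto simp: fX)

lemma f'n_X: "x \<in> X \<Longrightarrow> (f' ^^ n) x \<in> X"
  by (induction n) (auto simp: f'X)

lemma fn_g: "x \<in> X \<Longrightarrow> (f ^^ n) (g x) = g ((f ^^ n) x)"
  by (induction n) (auto simp: fg fn_X)

lemma fn_f'n: "x \<in> X \<Longrightarrow> (f ^^ n) ((f' ^^ n) x) = x"
proof (induction n)
  case 0 then show ?case by simp
next
  case (Suc n)
  have "(f ^^ Suc n) ((f' ^^ Suc n) x) = (f ^^ n) (f (f' ((f' ^^ n) x)))"
    by (simp add: funpow_swap1)
  also have "\<dots> = (f ^^ n) ((f' ^^ n) x)" using ff' f'n_X Suc.prems by simp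
  finally show ?case using Suc by simp
qed

lemma iter_E: "x \<in> X \<Longrightarrow> v \<in> E x \<Longrightarrow> It n x v \<in> E ((f ^^ n) x)"
  by (induction n) (auto simp: F_E fn_X)

lemma iter_Es: "i \<in> {1..l} \<Longrightarrow> x \<in> X \<Longrightarrow> v \<in> Es i x \<Longrightarrow> It n x v \<in> Es i ((f ^^ n) x)"
proof (induction n)
  case 0 then show ?case by simp
next
  case (Suc n)
  then show ?case using Es_img[of i "(f ^^ n) x"] fn_X by auto
qed

lemma iter_add: "x \<in> X \<Longrightarrow> u \<in> E x \<Longrightarrow> v \<in> E x \<Longrightarrow> It n x (u + v) = It n x u + It n x v"
  by (induction n) (auto simp: F_add fn_X iter_E)

lemma iter_sum: "x \<in> X \<Longrightarrow> finite A \<Longrightarrow> (\<And>j. j \<in> A \<Longrightarrow> v j \<in> E x) \<Longrightarrow>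
   It n x (\<Sum>j\<in>A. v j) = (\<Sum>j\<in>A. It n x (v j))"
  by (rule add_sum[OF Esub]) (auto simp: iter_add)

lemma iter_zero: "x \<in> X \<Longrightarrow> It n x 0 = 0"
  using iter_add[of x 0 0 n] Esub[of x] by (simp add: subspace_0)

lemma G_sum: "x \<in> X \<Longrightarrow> finite A \<Longrightarrow> (\<And>j. j \<in> A \<Longrightarrow> v j \<in> E x) \<Longrightarrow>
   G x (\<Sum>j\<in>A. v j) = (\<Sum>j\<in>A. G x (v j))"
  by (rule add_sum[OF Esub]) (auto simp: G_add)

lemma iter_hi: "i \<in> {1..l} \<Longrightarrow> x \<in> X \<Longrightarrow> t \<in> Es i x \<Longrightarrow>
   N ((f ^^ n) x) (It n x t) \<le> exp (real n * (chi i + eps)) * N x t"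
proof (induction n)
  case 0 then show ?case by simp
next
  case (Suc n)
  let ?y = "(f ^^ n) x"
  have y: "?y \<in> X" using fn_X Suc by simp
  have it: "It n x t \<in> Es i ?y" using iter_Es Suc by simp
  have "N ((f ^^ Suc n) x) (It (Suc n) x t) = N (f ?y) (F ?y (It n x t))" by simp
  also have "\<dots> \<le> exp (chi i + eps) * N ?y (It n x t)" using gr_hi[OF Suc.prems(1) y it] .
  also have "\<dots> \<le> exp (chi i + eps) * (exp (real n * (chi i + eps)) * N x t)"
    using Suc by (simp add: mult_left_mono)
  also have "\<dots> = exp (real (Suc n) * (chi i + eps)) * N x t"
    by (simp add: mult.assoc[symmetric] exp_add[symmetric] algebra_simps)
  finally show ?case .
qed

lemma iter_lo: "i \<in> {1..l} \<Longrightarrow> x \<in> X \<Longrightarrow> t \<in> Es i x \<Longrightarrow>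
   exp (real n * (chi i - eps)) * N x t \<le> N ((f ^^ n) x) (It n x t)"
proof (induction n)
  case 0 then show ?case by simp
next
  case (Suc n)
  let ?y = "(f ^^ n) x"
  have y: "?y \<in> X" using fn_X Suc by simp
  have it: "It n x t \<in> Es i ?y" using iter_Es Suc by simp
  have "exp (real (Suc n) * (chi i - eps)) * N x t = exp (chi i - eps) * (exp (real n * (chi i - eps)) * N x t)"
    by (simp add: mult.assoc[symmetric] exp_add[symmetric] algebra_simps)
  also have "\<dots> \<le> exp (chi i - eps) * N ?y (It n x t)"
    using Suc by (simp add: mult_left_mono)
  also have "\<dots> \<le> N (f ?y) (F ?y (It n x t))" using gr_lo[OF Suc.prems(1) y it] .
  finally show ?case by simp
qed

lemma iter_comm: "x \<in> X \<Longrightarrow> v \<in> E x \<Longrightarrow> G ((f ^^ n) x) (It n x v) = It n (g x) (G x v)"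
proof (induction n)
  case 0 then show ?case by simp
next
  case (Suc n)
  let ?y = "(f ^^ n) x"
  have "G ((f ^^ Suc n) x) (It (Suc n) x v) = G (f ?y) (F ?y (It n x v))" by simp
  also have "\<dots> = F (g ?y) (G ?y (It n x v))" using comm fn_X iter_E Suc by simp
  also have "\<dots> = It (Suc n) (g x) (G x v)" using Suc fn_g by simp
  finally show ?case .
qed

lemma back_ex: "i \<in> {1..l} \<Longrightarrow> x \<in> X \<Longrightarrow> u \<in> Es i x \<Longrightarrow> \<exists>w\<in>Es i ((f' ^^ n) x). It n ((f' ^^ n) x) w = u"
proof (induction n)
  case 0 then show ?case by auto
next
  case (Suc n)
  let ?y = "(f' ^^ n) x"
  obtain w where w: "w \<in> Es i ?y" "It n ?y w = u" using Suc by blast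
  have y: "?y \<in> X" using f'n_X Suc by simp
  have y': "f' ?y \<in> X" using f'X y by simp
  have "w \<in> Es i (f (f' ?y))" using w ff' y by simp
  then obtain w' where w': "w' \<in> Es i (f' ?y)" "F (f' ?y) w' = w"
    using Es_img[OF Suc.prems(1) y'] by (metis imageE)
  have "It (Suc n) (f' ?y) w' = It n (f (f' ?y)) (F (f' ?y) w')" by (rule iter_Suc')
  also have "\<dots> = u" using w w' ff' y by simp
  finally show ?case using w' by auto
qed

lemma decomp: "x \<in> X \<Longrightarrow> v \<in> E x \<Longrightarrow> \<exists>u. (\<forall>j\<in>{1..l}. u j \<in> Es j x) \<and> v = (\<Sum>j=1..l. u j)"
  using split by blast

lemma uniq:
  assumes x: "x \<in> X" and a: "\<forall>j\<in>{1..l}. a j \<in> Es j x" and b: "\<forall>j\<in>{1..l}. b j \<in> Es j x"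
    and s: "(\<Sum>j=1..l. a j) = (\<Sum>j=1..l. b j)"
  shows "\<forall>j\<in>{1..l}. a j = b j"
proof -
  define a' where "a' j = (if j \<in> {1..l} then a j else 0)" for j
  define b' where "b' j = (if j \<in> {1..l} then b j else 0)" for j
  have sa: "(\<Sum>j=1..l. a' j) = (\<Sum>j=1..l. a j)" by (rule sum.cong) (auto simp: a'_def)
  have sb: "(\<Sum>j=1..l. b' j) = (\<Sum>j=1..l. b j)" by (rule sum.cong) (auto simp: b'_def)
  have v: "(\<Sum>j=1..l. a j) \<in> E x"
    using Esub[OF x] a Es_sub[OF _ x] by (intro subspace_sum) blast+
  have P1: "(\<forall>i\<in>{1..l}. a' i \<in> Es i x) \<and> (\<forall>i. i \<notin> {1..l} \<longrightarrow> a' i = 0) \<and> (\<Sum>j=1..l. a j) = (\<Sum>i=1..l. a' i)"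
    using a sa by (auto simp: a'_def)
  have P2: "(\<forall>i\<in>{1..l}. b' i \<in> Es i x) \<and> (\<forall>i. i \<notin> {1..l} \<longrightarrow> b' i = 0) \<and> (\<Sum>j=1..l. a j) = (\<Sum>i=1..l. b' i)"
    using b sb s by (auto simp: b'_def)
  have "a' = b'" using split[OF x v] P1 P2 by blast
  then show ?thesis by (metis a'_def b'_def)
qed


lemma Es_E: "j \<in> {1..l} \<Longrightarrow> x \<in> X \<Longrightarrow> v \<in> Es j x \<Longrightarrow> v \<in> E x"
  using Es_sub by blast

lemma fwd:
  assumes x: "x \<in> X" and i: "i \<in> {1..l}" and u: "u \<in> Es i x"
    and w: "\<forall>j\<in>{1..l}. w j \<in> Es j (g x)" and wsum: "G x u = (\<Sum>j=1..l. w j)"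
  shows "\<forall>k\<in>{1..l}. i < k \<longrightarrow> w k = 0"
proof (rule ccontr)
  assume neg: "\<not> ?thesis"
  define KK where "KK = {k\<in>{1..l}. i < k \<and> w k \<noteq> 0}"
  have ne: "KK \<noteq> {}" using neg KK_def by auto
  have fin: "finite KK" using KK_def by simp
  define k where "k = Max KK"
  have kK: "k \<in> KK" using Max_in[OF fin ne] k_def by simp
  have k: "k \<in> {1..l}" "i < k" "w k \<noteq> 0" using kK KK_def by auto
  have hk: "\<And>j. j \<in> {1..l} \<Longrightarrow> k < j \<Longrightarrow> w j = 0"
  proof (rule ccontr)
    fix j assume j: "j \<in> {1..l}" "k < j" "w j \<noteq> 0"
    then have "j \<in> KK" using k KK_def by auto
    then have "j \<le> k" using Max_ge[OF fin] k_def by simp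
    then show False using j by simp
  qed
  have gx: "g x \<in> X" using gX x by simp
  have uE: "u \<in> E x" using Es_E i x u by simp
  have wE: "\<And>j. j \<in> {1..l} \<Longrightarrow> w j \<in> E (g x)" using w Es_E gx by blast
  define alpha where "alpha = chi k - eps"
  define beta where "beta = chi (k - 1) + eps"
  have ab: "alpha > beta" unfolding alpha_def beta_def using gap[of "k - 1" k] k i by auto
  define A where "A = N (g x) (w k) / C2"
  have A: "A > 0" unfolding A_def using N_pos[OF gx wE[OF k(1)] k(3)] C2 by simp
  define B where "B = C1 * K * N x u + (\<Sum>j\<in>{1..<k}. C1 * N (g x) (w j))"
  have main: "A * exp (real n * alpha) \<le> B * exp (real n * beta)" for n
  proof -
    let ?y = "(f ^^ n) (g x)"
    let ?z = "(f ^^ n) x"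
    define a where "a j = It n (g x) (w j)" for j
    define T where "T = It n (g x) (G x u)"
    have y: "?y \<in> X" using fn_X gx by simp
    have z: "?z \<in> X" using fn_X x by simp
    have yz: "?y = g ?z" using fn_g x by simp
    have aE: "\<And>j. j \<in> {1..l} \<Longrightarrow> a j \<in> E ?y" using iter_E gx wE a_def by simp
    have T1: "T = (\<Sum>j=1..l. a j)" unfolding T_def a_def wsum
      by (rule iter_sum[OF gx]) (auto simp: wE)
    have T2: "(\<Sum>j=1..l. a j) = (\<Sum>j=1..k. a j)"
    proof (rule sum.mono_neutral_right)
      show "finite {1..l}" by simp
      show "{1..k} \<subseteq> {1..l}" using k by auto
      show "\<forall>j\<in>{1..l} - {1..k}. a j = 0" using hk iter_zero[OF gx] a_def by auto
    qed
    have T3: "(\<Sum>j=1..k. a j) = a k + (\<Sum>j\<in>{1..<k}. a j)"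
    proof -
      have "{1..k} = insert k {1..<k}" using k by auto
      then show ?thesis by simp
    qed
    have ak: "a k = T - (\<Sum>j\<in>{1..<k}. a j)" using T1 T2 T3 by simp
    have n1: "norm (a k) \<le> norm T + (\<Sum>j\<in>{1..<k}. norm (a j))"
    proof -
      have "norm (a k) \<le> norm T + norm (\<Sum>j\<in>{1..<k}. a j)" using ak norm_triangle_ineq4 by metis
      also have "norm (\<Sum>j\<in>{1..<k}. a j) \<le> (\<Sum>j\<in>{1..<k}. norm (a j))" by (rule norm_sum)
      finally show ?thesis by simp
    qed
    have TG: "T = G ?z (It n x u)" unfolding T_def using iter_comm[OF x uE] by simp
    have itu: "It n x u \<in> E ?z" using iter_E x uE by simp
    have TE: "T \<in> E ?y" unfolding TG yz using G_E[OF z itu] .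
    have nT: "norm T \<le> C1 * K * N x u * exp (real n * beta)"
    proof -
      have "norm T \<le> C1 * N ?y T" using N_lo[OF y TE] .
      also have "N ?y T \<le> K * N ?z (It n x u)" unfolding TG yz using G_N[OF z itu] .
      also have "N ?z (It n x u) \<le> exp (real n * (chi i + eps)) * N x u" using iter_hi[OF i x u] .
      also have "exp (real n * (chi i + eps)) \<le> exp (real n * beta)"
        unfolding beta_def using cmono[of i "k - 1"] i k by (intro exp_mono_n) auto
      finally show ?thesis using C1 Kpos N_nonneg[OF x uE]
        by (simp add: mult_left_mono mult_right_mono algebra_simps)
    qed
    have naj: "norm (a j) \<le> C1 * N (g x) (w j) * exp (real n * beta)" if j: "j \<in> {1..<k}" for j
    proof -
      have j': "j \<in> {1..l}" using j k by auto
      have wj: "w j \<in> Es j (g x)" using w j' by blast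
      have "norm (a j) \<le> C1 * N ?y (a j)" using N_lo[OF y aE[OF j']] .
      also have "N ?y (a j) \<le> exp (real n * (chi j + eps)) * N (g x) (w j)"
        unfolding a_def using iter_hi[OF j' gx wj] .
      also have "exp (real n * (chi j + eps)) \<le> exp (real n * beta)"
        unfolding beta_def using cmono[of j "k - 1"] j k by (intro exp_mono_n) auto
      finally show ?thesis using C1 N_nonneg[OF gx wE[OF j']]
        by (simp add: mult_left_mono mult_right_mono algebra_simps)
    qed
    have lo: "A * exp (real n * alpha) \<le> norm (a k)"
    proof -
      have wk: "w k \<in> Es k (g x)" using w k by blast
      have "exp (real n * alpha) * N (g x) (w k) \<le> N ?y (a k)"
        unfolding a_def alpha_def using iter_lo[OF k(1) gx wk] .
      also have "\<dots> \<le> C2 * norm (a k)" using N_hi[OF y aE[OF k(1)]] .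
      finally show ?thesis unfolding A_def using C2 by (simp add: field_simps)
    qed
    have "A * exp (real n * alpha) \<le> norm T + (\<Sum>j\<in>{1..<k}. norm (a j))" using lo n1 by simp
    also have "\<dots> \<le> C1 * K * N x u * exp (real n * beta) + (\<Sum>j\<in>{1..<k}. C1 * N (g x) (w j) * exp (real n * beta))"
      using nT naj by (intro add_mono sum_mono) auto
    also have "\<dots> = B * exp (real n * beta)" unfolding B_def distrib_right sum_distrib_right by (simp add: mult.assoc)
    finally show ?thesis .
  qed
  show False by (rule exp_contra[OF A ab main])
qed


lemma bwd:
  assumes x: "x \<in> X" and i: "i \<in> {1..l}" and u: "u \<in> Es i x"
    and w: "\<forall>j\<in>{1..l}. w j \<in> Es j (g x)" and wsum: "G x u = (\<Sum>j=1..l. w j)"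
  shows "\<forall>k\<in>{1..l}. k < i \<longrightarrow> w k = 0"
proof (rule ccontr)
  assume neg: "\<not> ?thesis"
  define KK where "KK = {k\<in>{1..l}. k < i \<and> w k \<noteq> 0}"
  have ne: "KK \<noteq> {}" using neg KK_def by auto
  have fin: "finite KK" using KK_def by simp
  define k where "k = Min KK"
  have kK: "k \<in> KK" using Min_in[OF fin ne] k_def by simp
  have k: "k \<in> {1..l}" "k < i" "w k \<noteq> 0" using kK KK_def by auto
  have hk: "\<And>j. j \<in> {1..l} \<Longrightarrow> j < k \<Longrightarrow> w j = 0"
  proof (rule ccontr)
    fix j assume j: "j \<in> {1..l}" "j < k" "w j \<noteq> 0"
    then have "j \<in> KK" using k KK_def by auto
    then have "k \<le> j" using Min_le[OF fin] k_def by simp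
    then show False using j by simp
  qed
  have gx: "g x \<in> X" using gX x by simp
  have uE: "u \<in> E x" using Es_E i x u by simp
  have wE: "\<And>j. j \<in> {1..l} \<Longrightarrow> w j \<in> E (g x)" using w Es_E gx by blast
  define alpha where "alpha = - (chi k + eps)"
  define beta where "beta = - (chi (k + 1) - eps)"
  have ab: "alpha > beta" unfolding alpha_def beta_def using gap[of k "k + 1"] k i by auto
  define A where "A = N (g x) (w k) / C2"
  have A: "A > 0" unfolding A_def using N_pos[OF gx wE[OF k(1)] k(3)] C2 by simp
  define B where "B = C1 * K * N x u + (\<Sum>j\<in>{k<..l}. C1 * N (g x) (w j))"
  have main: "A * exp (real n * alpha) \<le> B * exp (real n * beta)" for n
  proof -
    define y where "y = (f' ^^ n) x"
    have y: "y \<in> X" using f'n_X x y_def by simp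
    have fny: "(f ^^ n) y = x" using fn_f'n x y_def by simp
    obtain z where z: "z \<in> Es i y" "It n y z = u" using back_ex[OF i x u] y_def by blast
    have zE: "z \<in> E y" using Es_E i y z by simp
    have gy: "g y \<in> X" using gX y by simp
    have fngy: "(f ^^ n) (g y) = g x" using fn_g[OF y] fny by simp
    have GzE: "G y z \<in> E (g y)" using G_E y zE by simp
    obtain b where b: "\<forall>j\<in>{1..l}. b j \<in> Es j (g y)" "G y z = (\<Sum>j=1..l. b j)"
      using decomp[OF gy GzE] by blast
    have bE: "\<And>j. j \<in> {1..l} \<Longrightarrow> b j \<in> E (g y)" using b Es_E gy by blast
    have "It n (g y) (G y z) = G ((f ^^ n) y) (It n y z)" using iter_comm[OF y zE] by simp
    also have "\<dots> = G x u" using fny z by simp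
    finally have e1: "It n (g y) (G y z) = G x u" .
    have e2: "It n (g y) (G y z) = (\<Sum>j=1..l. It n (g y) (b j))"
      unfolding b(2) by (rule iter_sum[OF gy]) (auto simp: bE)
    have itb: "\<forall>j\<in>{1..l}. It n (g y) (b j) \<in> Es j (g x)"
      using iter_Es[OF _ gy] b(1) fngy by metis
    have bw: "\<forall>j\<in>{1..l}. It n (g y) (b j) = w j"
      by (rule uniq[OF gx itb w]) (use e1 e2 wsum in simp)
    have N_itb_hi: "N (g x) (w j) \<le> exp (real n * (chi j + eps)) * N (g y) (b j)" if j: "j \<in> {1..l}" for j
      using iter_hi[OF j gy] b(1) j bw fngy by metis
    have N_itb_lo: "exp (real n * (chi j - eps)) * N (g y) (b j) \<le> N (g x) (w j)" if j: "j \<in> {1..l}" for j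
      using iter_lo[OF j gy] b(1) j bw fngy by metis
    have b0: "b j = 0" if j: "j \<in> {1..l}" "j < k" for j
    proof -
      have "N (g x) (w j) = 0" using hk j N_hi[OF gx, of 0] N_nonneg[OF gx, of 0] Esub[OF gx]
        by (simp add: subspace_0)
      then have "exp (real n * (chi j - eps)) * N (g y) (b j) \<le> 0" using N_itb_lo j by metis
      then have "N (g y) (b j) \<le> 0" by (simp add: mult_le_0_iff)
      then show ?thesis using N_zero[OF gy bE] j by simp
    qed
    have S2: "(\<Sum>j=1..l. b j) = (\<Sum>j=k..l. b j)"
    proof (rule sum.mono_neutral_right)
      show "finite {1..l}" by simp
      show "{k..l} \<subseteq> {1..l}" using k by auto
      show "\<forall>j\<in>{1..l} - {k..l}. b j = 0" using b0 by auto
    qed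
    have S3: "(\<Sum>j=k..l. b j) = b k + (\<Sum>j\<in>{k<..l}. b j)"
    proof -
      have "{k..l} = insert k {k<..l}" using k by auto
      then show ?thesis by simp
    qed
    have bk: "b k = G y z - (\<Sum>j\<in>{k<..l}. b j)" using b(2) S2 S3 by simp
    have n1: "norm (b k) \<le> norm (G y z) + (\<Sum>j\<in>{k<..l}. norm (b j))"
    proof -
      have "norm (b k) \<le> norm (G y z) + norm (\<Sum>j\<in>{k<..l}. b j)" using bk norm_triangle_ineq4 by metis
      also have "norm (\<Sum>j\<in>{k<..l}. b j) \<le> (\<Sum>j\<in>{k<..l}. norm (b j))" by (rule norm_sum)
      finally show ?thesis by simp
    qed
    have nG: "norm (G y z) \<le> C1 * K * N x u * exp (real n * beta)"
    proof -
      have zz: "exp (real n * (chi i - eps)) * N y z \<le> N x u"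
        using iter_lo[OF i y z(1), of n] fny z(2) by simp
      have "norm (G y z) \<le> C1 * N (g y) (G y z)" using N_lo[OF gy GzE] .
      also have "N (g y) (G y z) \<le> K * N y z" using G_N[OF y zE] .
      also have "N y z \<le> exp (real n * (- (chi i - eps))) * N x u" using exp_inv1[OF zz] .
      also have "exp (real n * (- (chi i - eps))) \<le> exp (real n * beta)"
        unfolding beta_def using cmono[of "k + 1" i] i k by (intro exp_mono_n) auto
      finally show ?thesis using C1 Kpos N_nonneg[OF x uE]
        by (simp add: mult_left_mono mult_right_mono algebra_simps)
    qed
    have nbj: "norm (b j) \<le> C1 * N (g x) (w j) * exp (real n * beta)" if j: "j \<in> {k<..l}" for j
    proof -
      have j': "j \<in> {1..l}" using j k by auto
      have "norm (b j) \<le> C1 * N (g y) (b j)" using N_lo[OF gy bE[OF j']] .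
      also have "N (g y) (b j) \<le> exp (real n * (- (chi j - eps))) * N (g x) (w j)"
        using exp_inv1[OF N_itb_lo[OF j']] .
      also have "exp (real n * (- (chi j - eps))) \<le> exp (real n * beta)"
        unfolding beta_def using cmono[of "k + 1" j] j k by (intro exp_mono_n) auto
      finally show ?thesis using C1 N_nonneg[OF gx wE[OF j']]
        by (simp add: mult_left_mono mult_right_mono algebra_simps)
    qed
    have lo: "A * exp (real n * alpha) \<le> norm (b k)"
    proof -
      have "exp (real n * alpha) * N (g x) (w k) \<le> N (g y) (b k)"
        unfolding alpha_def using exp_inv2[OF N_itb_hi[OF k(1)]] .
      also have "\<dots> \<le> C2 * norm (b k)" using N_hi[OF gy bE[OF k(1)]] .
      finally show ?thesis unfolding A_def using C2 by (simp add: field_simps)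
    qed
    have "A * exp (real n * alpha) \<le> norm (G y z) + (\<Sum>j\<in>{k<..l}. norm (b j))" using lo n1 by simp
    also have "\<dots> \<le> C1 * K * N x u * exp (real n * beta) + (\<Sum>j\<in>{k<..l}. C1 * N (g x) (w j) * exp (real n * beta))"
      using nG nbj by (intro add_mono sum_mono) auto
    also have "\<dots> = B * exp (real n * beta)" unfolding B_def distrib_right sum_distrib_right by (simp add: mult.assoc)
    finally show ?thesis .
  qed
  show False by (rule exp_contra[OF A ab main])
qed


lemma G_sub:
  assumes x: "x \<in> X" and i: "i \<in> {1..l}" and u: "u \<in> Es i x"
  shows "G x u \<in> Es i (g x)"
proof -
  have gx: "g x \<in> X" using gX x by simp
  have uE: "u \<in> E x" using Es_E i x u by simp
  obtain w where w: "\<forall>j\<in>{1..l}. w j \<in> Es j (g x)" "G x u = (\<Sum>j=1..l. w j)"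
    using decomp[OF gx G_E[OF x uE]] by blast
  have f1: "\<forall>k\<in>{1..l}. i < k \<longrightarrow> w k = 0" by (rule fwd[OF x i u w(1) w(2)])
  have f2: "\<forall>k\<in>{1..l}. k < i \<longrightarrow> w k = 0" by (rule bwd[OF x i u w(1) w(2)])
  have z: "\<forall>j\<in>{1..l}. j \<noteq> i \<longrightarrow> w j = 0"
  proof (intro ballI impI)
    fix j assume j: "j \<in> {1..l}" "j \<noteq> i"
    then have "j < i \<or> i < j" by arith
    then show "w j = 0" using f1 f2 j(1) by blast
  qed
  have "(\<Sum>j=1..l. w j) = w i + (\<Sum>j\<in>{1..l} - {i}. w j)"
    by (rule sum.remove) (use i in auto)
  also have "(\<Sum>j\<in>{1..l} - {i}. w j) = 0" using z by (intro sum.neutral) auto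
  finally show ?thesis using w i by simp
qed

lemma G_img:
  assumes x: "x \<in> X" and i: "i \<in> {1..l}"
  shows "G x ` Es i x = Es i (g x)"
proof
  show "G x ` Es i x \<subseteq> Es i (g x)" using G_sub[OF x i] by blast
  show "Es i (g x) \<subseteq> G x ` Es i x"
  proof
    fix w assume w: "w \<in> Es i (g x)"
    have gx: "g x \<in> X" using gX x by simp
    have wE: "w \<in> E (g x)" using Es_E i gx w by simp
    obtain v where v: "v \<in> E x" "G x v = w" using G_surj[OF x wE] by blast
    obtain u where u: "\<forall>j\<in>{1..l}. u j \<in> Es j x" "v = (\<Sum>j=1..l. u j)"
      using decomp[OF x v(1)] by blast
    have uE: "\<And>j. j \<in> {1..l} \<Longrightarrow> u j \<in> E x" using u Es_E x by blast
    have s1: "w = (\<Sum>j=1..l. G x (u j))" using v u G_sum[OF x, of "{1..l}" u] uE by simp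
    define w' where "w' j = (if j = i then w else 0)" for j
    have s2: "w = (\<Sum>j=1..l. w' j)" using i by (simp add: w'_def sum.delta)
    have a: "\<forall>j\<in>{1..l}. G x (u j) \<in> Es j (g x)" using G_sub[OF x] u by blast
    have b: "\<forall>j\<in>{1..l}. w' j \<in> Es j (g x)" unfolding w'_def using w Es_subsp[OF _ gx] subspace_0 by fastforce
    have "\<forall>j\<in>{1..l}. G x (u j) = w' j" using uniq[OF gx a b] s1 s2 by metis
    then have "G x (u i) = w" using i w'_def by simp
    then show "w \<in> G x ` Es i x" using u i by blast
  qed
qed

end


lemma gap_lemma:
  fixes chi :: "nat \<Rightarrow> real"
  assumes l_pos: "l \<ge> 1"
    and chi_incr: "\<forall>i j. 1 \<le> i \<and> i < j \<and> j \<le> l \<longrightarrow> chi i < chi j"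
    and chi_neg: "chi l < 0" and eps_pos: "0 < eps" and eps_small: "eps < eps0 l chi"
    and jk: "1 \<le> j" "j < k" "k \<le> l"
  shows "chi j + eps < chi k - eps"
proof -
  define i where "i = k - 1"
  have i: "1 \<le> i" "i < k" "k = Suc i" using jk i_def by auto
  define M where "M = {t. \<exists>i\<in>{1..l}. \<exists>s :: nat \<Rightarrow> nat.
       t = chi i - (\<Sum>j=1..l. real (s j) * chi j) \<and> t < 0}"
  have kin: "k \<in> {1..l}" using jk by auto
  have s1: "(\<Sum>m=1..l. real (if m = k then 1 else 0) * chi m) = (\<Sum>m=1..l. if m = k then chi m else 0)"
    by (rule sum.cong) auto
  also have "\<dots> = chi k" using kin by (simp add: sum.delta)
  finally have s2: "(\<Sum>m=1..l. real (if m = k then (1::nat) else 0) * chi m) = chi k" by simp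
  have lt: "chi i - chi k < 0" using chi_incr i jk by auto
  have tM: "chi i - chi k \<in> M" unfolding M_def
    using i jk lt s2 by (intro CollectI bexI[of _ i] exI[of _ "\<lambda>m. if m = k then 1 else 0"]) auto
  have bdd: "bdd_above M" unfolding M_def bdd_above_def by (intro exI[of _ 0]) auto
  have mu: "mu_const l chi = Sup M" unfolding mu_const_def M_def by simp
  have mu1: "chi i - chi k \<le> mu_const l chi" unfolding mu using cSup_upper[OF tM bdd] .
  have Mne: "M \<noteq> {}" using tM by auto
  have mu2: "mu_const l chi \<le> 0" unfolding mu
    by (rule cSup_least[OF Mne]) (auto simp: M_def)
  have c1l: "chi 1 \<le> chi l"
  proof (cases "l = 1")
    case True then show ?thesis by simp
  next
    case False then show ?thesis using chi_incr l_pos by (auto intro: less_imp_le)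
  qed
  have "1 \<le> chi 1 / chi l" using c1l chi_neg by (simp add: le_divide_eq)
  then have d: "1 \<le> d_const l chi" unfolding d_const_def by simp
  have e1: "eps0 l chi \<le> - mu_const l chi / (real_of_int (d_const l chi) + 1)"
    unfolding eps0_def by simp
  have e2: "- mu_const l chi / (real_of_int (d_const l chi) + 1) \<le> - mu_const l chi / 2"
    using mu2 d by (intro divide_left_mono) auto
  have cji: "chi j \<le> chi i"
  proof (cases "j = i")
    case True then show ?thesis by simp
  next
    case False then show ?thesis using chi_incr jk i by (auto intro: less_imp_le)
  qed
  show ?thesis using eps_small e1 e2 mu1 cji by linarith
qed


theorem mainTheorem9:
  fixes X :: "'x::metric_space set"
    and E :: "'x \<Rightarrow> 'v::euclidean_space set"
    and f g :: "'x \<Rightarrow> 'x"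
    and F \<Gamma> :: "'x \<Rightarrow> 'v \<Rightarrow> 'v"
    and l :: nat and chi :: "nat \<Rightarrow> real" and \<epsilon> :: real
    and Es :: "nat \<Rightarrow> 'x \<Rightarrow> 'v set"
  assumes X_compact: "compact X"
    and E_bundle: "cont_subbundle X E"
    and f_homeo: "\<exists>f'. homeomorphism X X f f'"
    and F_ext: "lin_ext X E f F"
    and l_pos: "l \<ge> 1"
    and chi_incr: "\<forall>i j. 1 \<le> i \<and> i < j \<and> j \<le> l \<longrightarrow> chi i < chi j"
    and chi_neg: "chi l < 0"
    and eps_pos: "0 < \<epsilon>" and eps_small: "\<epsilon> < eps0 l chi"
    and splitting: "invariant_splitting X E f F l Es"
    and metric: "\<exists>ip. cont_inner_family X E ip \<and>
       (\<forall>i\<in>{1..l}. \<forall>x\<in>X. \<forall>t\<in>Es i x.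
          exp (chi i - \<epsilon>) * sqrt (ip x t t) \<le> sqrt (ip (f x) (F x t) (F x t)) \<and>
          sqrt (ip (f x) (F x t) (F x t)) \<le> exp (chi i + \<epsilon>) * sqrt (ip x t t))"
    and g_homeo: "\<exists>g'. homeomorphism X X g g'"
    and fg_comm: "\<forall>x\<in>X. f (g x) = g (f x)"
    and \<Gamma>_ext: "lin_ext X E g \<Gamma>"
    and \<Gamma>F_comm: "\<forall>x\<in>X. \<forall>v\<in>E x. \<Gamma> (f x) (F x v) = F (g x) (\<Gamma> x v)"
  shows "\<forall>x\<in>X. \<forall>i\<in>{1..l}. \<Gamma> x ` Es i x = Es i (g x)"
  
proof -
  obtain f' where hf: "homeomorphism X X f f'" using f_homeo by blast
  obtain g' where hg: "homeomorphism X X g g'" using g_homeo by blast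
  obtain ip where ip: "cont_inner_family X E ip" and ipg: "\<forall>i\<in>{1..l}. \<forall>x\<in>X. \<forall>t\<in>Es i x.
          exp (chi i - \<epsilon>) * sqrt (ip x t t) \<le> sqrt (ip (f x) (F x t) (F x t)) \<and>
          sqrt (ip (f x) (F x t) (F x t)) \<le> exp (chi i + \<epsilon>) * sqrt (ip x t t)"
    using metric by blast
  obtain C1 C2 where C: "C1 > 0" "C2 > 0" "\<forall>x\<in>X. \<forall>v\<in>E x. norm v \<le> C1 * sqrt (ip x v v) \<and> sqrt (ip x v v) \<le> C2 * norm v"
    using norm_equiv[OF X_compact E_bundle ip] by blast
  obtain KG where KG: "KG > 0" "\<forall>x\<in>X. \<forall>v\<in>E x. norm (\<Gamma> x v) \<le> KG * norm v"
    using lin_bound[OF X_compact E_bundle \<Gamma>_ext] by blast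
  have fX: "\<And>x. x \<in> X \<Longrightarrow> f x \<in> X" using hf unfolding homeomorphism_def by blast
  have f'X: "\<And>x. x \<in> X \<Longrightarrow> f' x \<in> X" using hf unfolding homeomorphism_def by blast
  have ff': "\<And>x. x \<in> X \<Longrightarrow> f (f' x) = x" using hf unfolding homeomorphism_def by blast
  have gX: "\<And>x. x \<in> X \<Longrightarrow> g x \<in> X" using hg unfolding homeomorphism_def by blast
  have Esub: "\<And>x. x \<in> X \<Longrightarrow> subspace (E x)" using E_bundle unfolding cont_subbundle_def by blast
  have Fl: "\<And>x. x \<in> X \<Longrightarrow> fiber_linear (E x) (F x) \<and> bij_betw (F x) (E x) (E (f x))"
    using F_ext unfolding lin_ext_def by blast
  have Gl: "\<And>x. x \<in> X \<Longrightarrow> fiber_linear (E x) (\<Gamma> x) \<and> bij_betw (\<Gamma> x) (E x) (E (g x))"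
    using \<Gamma>_ext unfolding lin_ext_def by blast
  have F_E: "\<And>x v. x \<in> X \<Longrightarrow> v \<in> E x \<Longrightarrow> F x v \<in> E (f x)"
    using Fl by (meson bij_betw_apply)
  have G_E: "\<And>x v. x \<in> X \<Longrightarrow> v \<in> E x \<Longrightarrow> \<Gamma> x v \<in> E (g x)"
    using Gl by (meson bij_betw_apply)
  have F_add: "\<And>x u v. x \<in> X \<Longrightarrow> u \<in> E x \<Longrightarrow> v \<in> E x \<Longrightarrow> F x (u + v) = F x u + F x v"
    using Fl unfolding fiber_linear_def by blast
  have G_add: "\<And>x u v. x \<in> X \<Longrightarrow> u \<in> E x \<Longrightarrow> v \<in> E x \<Longrightarrow> \<Gamma> x (u + v) = \<Gamma> x u + \<Gamma> x v"
    using Gl unfolding fiber_linear_def by blast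
  have G_surj: "\<exists>v\<in>E x. \<Gamma> x v = w" if x: "x \<in> X" and w: "w \<in> E (g x)" for x w
  proof -
    have "\<Gamma> x ` E x = E (g x)" using Gl[OF x] unfolding bij_betw_def by blast
    then have "w \<in> \<Gamma> x ` E x" using w by simp
    then show ?thesis by blast
  qed
  have spl: "\<forall>i\<in>{1..l}. cont_subbundle X (Es i) \<and> (\<forall>x\<in>X. Es i x \<subseteq> E x \<and> F x ` Es i x = Es i (f x))"
    "\<forall>x\<in>X. \<forall>v\<in>E x. \<exists>!u :: nat \<Rightarrow> 'v. (\<forall>i\<in>{1..l}. u i \<in> Es i x) \<and>
         (\<forall>i. i \<notin> {1..l} \<longrightarrow> u i = 0) \<and> v = (\<Sum>i=1..l. u i)"
    using splitting[unfolded invariant_splitting_def] by (rule conjunct1, rule conjunct2)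
  have Es_subsp: "\<And>i x. i \<in> {1..l} \<Longrightarrow> x \<in> X \<Longrightarrow> subspace (Es i x)"
    using spl(1) unfolding cont_subbundle_def by blast
  have G_N: "sqrt (ip (g x) (\<Gamma> x v) (\<Gamma> x v)) \<le> (C2 * KG * C1) * sqrt (ip x v v)"
    if x: "x \<in> X" and v: "v \<in> E x" for x v
  proof -
    have "sqrt (ip (g x) (\<Gamma> x v) (\<Gamma> x v)) \<le> C2 * norm (\<Gamma> x v)" using C(3) gX[OF x] G_E[OF x v] by blast
    also have "\<dots> \<le> C2 * (KG * norm v)" using KG(2) x v C(2) by (simp add: mult_left_mono)
    also have "\<dots> \<le> C2 * (KG * (C1 * sqrt (ip x v v)))" using C(3) x v C(2) KG(1) by (simp add: mult_left_mono)
    finally show ?thesis by (simp add: mult.assoc)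
  qed
  interpret D: dyn X E f f' g F \<Gamma> l chi \<epsilon> Es "\<lambda>x v. sqrt (ip x v v)" C1 C2 "C2 * KG * C1"
  proof (unfold_locales)
    show "\<And>x. x \<in> X \<Longrightarrow> f x \<in> X" by (rule fX)
    show "\<And>x. x \<in> X \<Longrightarrow> f' x \<in> X" by (rule f'X)
    show "\<And>x. x \<in> X \<Longrightarrow> f (f' x) = x" by (rule ff')
    show "\<And>x. x \<in> X \<Longrightarrow> g x \<in> X" by (rule gX)
    show "\<And>x. x \<in> X \<Longrightarrow> f (g x) = g (f x)" using fg_comm by blast
    show "\<And>x. x \<in> X \<Longrightarrow> subspace (E x)" by (rule Esub)
    show "\<And>x v. x \<in> X \<Longrightarrow> v \<in> E x \<Longrightarrow> F x v \<in> E (f x)" by (rule F_E)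
    show "\<And>x u v. x \<in> X \<Longrightarrow> u \<in> E x \<Longrightarrow> v \<in> E x \<Longrightarrow> F x (u + v) = F x u + F x v" by (rule F_add)
    show "\<And>x v. x \<in> X \<Longrightarrow> v \<in> E x \<Longrightarrow> \<Gamma> x v \<in> E (g x)" by (rule G_E)
    show "\<And>x u v. x \<in> X \<Longrightarrow> u \<in> E x \<Longrightarrow> v \<in> E x \<Longrightarrow> \<Gamma> x (u + v) = \<Gamma> x u + \<Gamma> x v" by (rule G_add)
    show "\<And>x w. x \<in> X \<Longrightarrow> w \<in> E (g x) \<Longrightarrow> \<exists>v\<in>E x. \<Gamma> x v = w" by (rule G_surj)
    show "\<And>x v. x \<in> X \<Longrightarrow> v \<in> E x \<Longrightarrow> \<Gamma> (f x) (F x v) = F (g x) (\<Gamma> x v)" using \<Gamma>F_comm by blast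
    show "\<And>i x. i \<in> {1..l} \<Longrightarrow> x \<in> X \<Longrightarrow> Es i x \<subseteq> E x" using spl(1) by blast
    show "\<And>i x. i \<in> {1..l} \<Longrightarrow> x \<in> X \<Longrightarrow> subspace (Es i x)" by (rule Es_subsp)
    show "\<And>i x. i \<in> {1..l} \<Longrightarrow> x \<in> X \<Longrightarrow> F x ` Es i x = Es i (f x)" using spl(1) by blast
    show "\<And>x v. x \<in> X \<Longrightarrow> v \<in> E x \<Longrightarrow> \<exists>!u :: nat \<Rightarrow> 'v. (\<forall>i\<in>{1..l}. u i \<in> Es i x) \<and>
         (\<forall>i. i \<notin> {1..l} \<longrightarrow> u i = 0) \<and> v = (\<Sum>i=1..l. u i)" by (rule spl(2)[rule_format])
    show "C1 > 0" "C2 > 0" by (rule C(1), rule C(2))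
    show "C2 * KG * C1 > 0" using C KG by simp
    show "\<And>x v. x \<in> X \<Longrightarrow> v \<in> E x \<Longrightarrow> norm v \<le> C1 * sqrt (ip x v v)" using C(3) by blast
    show "\<And>x v. x \<in> X \<Longrightarrow> v \<in> E x \<Longrightarrow> sqrt (ip x v v) \<le> C2 * norm v" using C(3) by blast
    show "\<And>x v. x \<in> X \<Longrightarrow> v \<in> E x \<Longrightarrow> sqrt (ip (g x) (\<Gamma> x v) (\<Gamma> x v)) \<le> C2 * KG * C1 * sqrt (ip x v v)"
      by (rule G_N)
    show "\<And>i x t. i \<in> {1..l} \<Longrightarrow> x \<in> X \<Longrightarrow> t \<in> Es i x \<Longrightarrow> exp (chi i - \<epsilon>) * sqrt (ip x t t) \<le> sqrt (ip (f x) (F x t) (F x t))"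
      using ipg by blast
    show "\<And>i x t. i \<in> {1..l} \<Longrightarrow> x \<in> X \<Longrightarrow> t \<in> Es i x \<Longrightarrow> sqrt (ip (f x) (F x t) (F x t)) \<le> exp (chi i + \<epsilon>) * sqrt (ip x t t)"
      using ipg by blast
    show "\<And>j k. 1 \<le> j \<Longrightarrow> j < k \<Longrightarrow> k \<le> l \<Longrightarrow> chi j + \<epsilon> < chi k - \<epsilon>"
      by (rule gap_lemma[OF l_pos chi_incr chi_neg eps_pos eps_small])
    show "\<And>j k. 1 \<le> j \<Longrightarrow> j \<le> k \<Longrightarrow> k \<le> l \<Longrightarrow> chi j \<le> chi k"
      using chi_incr by (metis le_less)
  qed
  show ?thesis using D.G_img by blast
qed

end
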